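(* Let $d:\mathbb{R}\to\mathbb{R}$ be a derivation and $\alpha\ge1$. Then the function $F_{d,\alpha}:\mathbb{R}_+\to\mathbb{R}_+$, $F_{d,\alpha}(x)=x^\alpha\exp\big(d(x)/x\big)$, is multiplicative and Jensen convex, i.e. $F_{d,\alpha}\big(\frac{x+y}{2}\big)\le\frac{F_{d,\alpha}(x)+F_{d,\alpha}(y)}{2}$ for all $x,y>0$. Hence, if $d$ is a nonzero derivation, then $F_{d,\alpha}$ is a discontinuous function which is Jensen convex and multiplicative.
   Context: $\mathbb{R}_+=]0,\infty[$. A derivation is a function $d:\mathbb{R}\to\mathbb{R}$ that is additive and satisfies $d(xy)=xd(y)+yd(x)$ for all $x,y\in\mathbb{R}$. A function $m:\mathbb{R}_+\to\mathbb{R}_+$ is multiplicative if $m(xy)=m(x)m(y)$ for all $x,y>0$. *)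

theory Defs
  imports "HOL-Analysis.Analysis"
begin

definition derivation :: "(real \<Rightarrow> real) \<Rightarrow> bool" where
  "derivation d \<longleftrightarrow> (\<forall>x y. d (x + y) = d x + d y) \<and> (\<forall>x y. d (x * y) = x * d y + y * d x)"

definition multiplicative_pos :: "(real \<Rightarrow> real) \<Rightarrow> bool" where
  "multiplicative_pos m \<longleftrightarrow> (\<forall>x>0. m x > 0) \<and> (\<forall>x>0. \<forall>y>0. m (x * y) = m x * m y)"

definition jensen_convex_pos :: "(real \<Rightarrow> real) \<Rightarrow> bool" where
  "jensen_convex_pos f \<longleftrightarrow> (\<forall>x>0. \<forall>y>0. f ((x + y) / 2) \<le> (f x + f y) / 2)"

definition F_da :: "(real \<Rightarrow> real) \<Rightarrow> real \<Rightarrow> real \<Rightarrow> real" where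
  "F_da d \<alpha> x = x powr \<alpha> * exp (d x / x)"

end

theory Submission
  imports Defs
begin

lemma der_basic:
  assumes "derivation d"
  shows "d (x + y) = d x + d y" "d (x * y) = x * d y + y * d x"
  using assms unfolding derivation_def by auto

lemma der_int: assumes "derivation d" shows "d (of_int n) = 0"
proof -
  have add: "\<And>x y. d (x + y) = d x + d y" using der_basic[OF assms] by auto
  have d0: "d 0 = 0" using add[of 0 0] by simp
  have d1: "d 1 = 0" using der_basic(2)[OF assms, of 1 1] by simp
  have neg: "d (- x) = - d x" for x using add[of x "-x"] d0 by simp
  have nat: "d (of_nat k) = 0" for k
  proof (induction k)
    case 0 then show ?case using d0 by simp
  next
    case (Suc k)
    have "d (of_nat (Suc k)) = d (of_nat k + 1)" by (simp add: add.commute)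
    also have "\<dots> = d (of_nat k) + d 1" by (rule add)
    finally show ?case using Suc d1 by simp
  qed
  show ?thesis
  proof (cases "n \<ge> 0")
    case True then show ?thesis using nat[of "nat n"] by simp
  next
    case False
    then have e: "of_int n = - real (nat (- n))" by simp
    have "d (- real (nat (- n))) = - d (real (nat (- n)))" by (rule neg)
    then show ?thesis unfolding e using nat[of "nat (-n)"] by simp
  qed
qed

lemma der_rat: assumes "derivation d" and "r \<in> \<rat>" shows "d r = 0"
proof -
  obtain p q where r: "r = of_int p / of_int q" and q0: "q > 0"
    using assms(2) by (rule Rats_cases')
  have q: "q \<noteq> 0" using q0 by simp
  have "d (of_int q * r) = of_int q * d r + r * d (of_int q)"
    using der_basic(2)[OF assms(1)] by blast
  moreover have "of_int q * r = of_int p" using q r by simp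
  ultimately have "of_int q * d r = 0" using der_int[OF assms(1)] by simp
  then show ?thesis using q by simp
qed

lemma der_half: assumes "derivation d" shows "d ((x + y) / 2) = (d x + d y) / 2"
proof -
  have add: "\<And>x y. d (x + y) = d x + d y" using der_basic[OF assms] by auto
  have "2 * d ((x+y)/2) = d (x+y)" using add[of "(x+y)/2" "(x+y)/2"] by simp
  then show ?thesis using add[of x y] by simp
qed

lemma jensen_step:
  fixes x y a b \<beta> :: real
  assumes x: "x > 0" and y: "y > 0" and b: "\<beta> \<ge> 0"
  shows "((x+y)/2) powr (\<beta>+1) * exp ((x*a + y*b)/(x+y))
         \<le> (x powr (\<beta>+1) * exp a + y powr (\<beta>+1) * exp b) / 2"
proof -
  define m where "m = (x+y)/2"
  define l where "l = x/(x+y)"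
  have m: "m > 0" using x y by (simp add: m_def)
  have l1: "1 - l = y/(x+y)" using x y by (simp add: l_def field_simps)
  have l0: "l \<ge> 0" "1 - l \<ge> 0" using x y l1 by (auto simp: l_def)
  define A where "A = a + \<beta> * ln x"
  define B where "B = b + \<beta> * ln y"
  define c where "c = l * A + (1-l) * B"
  have eA: "x powr (\<beta>+1) * exp a = x * exp A"
    using x by (simp add: A_def exp_add powr_def field_simps)
  have eB: "y powr (\<beta>+1) * exp b = y * exp B"
    using y by (simp add: B_def exp_add powr_def field_simps)
  have rhs: "(x powr (\<beta>+1) * exp a + y powr (\<beta>+1) * exp b) / 2
      = m * (l * exp A + (1-l) * exp B)"
  proof -
    have xy: "x + y \<noteq> 0" using x y by simp
    have ml: "m * l = x / 2" using xy by (simp add: m_def l_def field_simps)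
    have ml1: "m * (1 - l) = y / 2" using xy by (simp add: m_def l1 field_simps)
    have "m * (l * exp A + (1-l) * exp B) = (m * l) * exp A + (m * (1 - l)) * exp B"
      by (simp add: algebra_simps)
    then show ?thesis unfolding eA eB ml ml1 by simp
  qed
  have convA: "exp A \<ge> exp c * (1 + (A - c))"
  proof -
    have "exp A = exp c * exp (A - c)" by (simp add: exp_diff)
    then show ?thesis using exp_ge_add_one_self[of "A - c"] by (simp add: mult_left_mono)
  qed
  have convB: "exp B \<ge> exp c * (1 + (B - c))"
  proof -
    have "exp B = exp c * exp (B - c)" by (simp add: exp_diff)
    then show ?thesis using exp_ge_add_one_self[of "B - c"] by (simp add: mult_left_mono)
  qed
  have "l * exp A + (1-l) * exp B \<ge> l * (exp c * (1 + (A - c))) + (1-l) * (exp c * (1 + (B - c)))"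
    using convA convB l0 by (intro add_mono mult_left_mono) auto
  also have "l * (exp c * (1 + (A - c))) + (1-l) * (exp c * (1 + (B - c))) = exp c"
    by (simp add: c_def algebra_simps)
  finally have conv: "exp c \<le> l * exp A + (1-l) * exp B" .
  have lnx: "ln x - ln m \<ge> 1 - m / x"
    using ln_le_minus_one[of "m/x"] x m by (simp add: ln_div)
  have lny: "ln y - ln m \<ge> 1 - m / y"
    using ln_le_minus_one[of "m/y"] y m by (simp add: ln_div)
  have "l * (ln x - ln m) + (1-l) * (ln y - ln m) \<ge> l * (1 - m/x) + (1-l) * (1 - m/y)"
    using lnx lny l0 by (intro add_mono mult_left_mono) auto
  also have "l * (1 - m/x) + (1-l) * (1 - m/y) = 0"
  proof -
    have xy: "x + y \<noteq> 0" using x y by simp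
    have a1: "l * (m / x) = 1/2" using x y by (simp add: l_def m_def field_simps) (smt (verit) mult_pos_pos)
    have a2: "(1 - l) * (m / y) = 1/2" using x y by (simp add: l1 m_def field_simps) (smt (verit) mult_pos_pos)
    have "l * (1 - m/x) + (1-l) * (1 - m/y) = 1 - l * (m / x) - (1 - l) * (m / y)"
      by (simp add: algebra_simps)
    then show ?thesis using a1 a2 by linarith
  qed
  finally have lnm: "ln m \<le> l * ln x + (1-l) * ln y" by (simp add: algebra_simps)
  have ceq: "c = (x*a + y*b)/(x+y) + \<beta> * (l * ln x + (1-l) * ln y)"
  proof -
    have "l*a + (1-l)*b = (x*a+y*b)/(x+y)" unfolding l1 by (simp add: l_def add_divide_distrib)
    moreover have "c = (l*a + (1-l)*b) + \<beta> * (l * ln x + (1-l) * ln y)"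
      by (simp add: c_def A_def B_def algebra_simps)
    ultimately show ?thesis by simp
  qed
  have "\<beta> * ln m + (x*a + y*b)/(x+y) \<le> c"
    unfolding ceq using lnm b by (simp add: mult_left_mono)
  hence "exp (\<beta> * ln m + (x*a + y*b)/(x+y)) \<le> exp c" by simp
  hence "exp (\<beta> * ln m + (x*a + y*b)/(x+y)) \<le> l * exp A + (1-l) * exp B" using conv by linarith
  hence ineq: "m * exp (\<beta> * ln m + (x*a + y*b)/(x+y)) \<le> m * (l * exp A + (1-l) * exp B)"
    using conv m by (intro mult_left_mono) auto
  have eq: "m powr (\<beta>+1) * exp ((x*a + y*b)/(x+y)) = m * exp (\<beta> * ln m + (x*a + y*b)/(x+y))"
  proof -
    have p1: "m powr (\<beta>+1) = m powr \<beta> * m" using m by (simp add: powr_add)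
    have p2: "m powr \<beta> = exp (\<beta> * ln m)" using m by (simp add: powr_def mult.commute)
    have "m powr (\<beta>+1) = m * exp (\<beta> * ln m)" unfolding p1 p2 by simp
    then show ?thesis by (simp add: exp_add)
  qed
  have fin: "m powr (\<beta>+1) * exp ((x*a + y*b)/(x+y)) \<le> (x powr (\<beta>+1) * exp a + y powr (\<beta>+1) * exp b) / 2"
    unfolding eq rhs by (rule ineq)
  show ?thesis using fin unfolding m_def .
qed

theorem corollary4:
  fixes d :: "real \<Rightarrow> real" and \<alpha> :: real
  assumes "derivation d" and "\<alpha> \<ge> 1"
  shows "multiplicative_pos (F_da d \<alpha>) \<and> jensen_convex_pos (F_da d \<alpha>)
         \<and> (d \<noteq> (\<lambda>_. 0) \<longrightarrow> \<not> continuous_on {0<..} (F_da d \<alpha>))"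
proof (intro conjI impI)
  note D = der_basic[OF assms(1)]
  show "multiplicative_pos (F_da d \<alpha>)"
    unfolding multiplicative_pos_def F_da_def
  proof (intro conjI allI impI)
    fix x y :: real assume x: "x > 0" and y: "y > 0"
    have "d (x*y) / (x*y) = d x / x + d y / y" using x y by (simp add: D field_simps)
    then show "(x*y) powr \<alpha> * exp (d (x*y) / (x*y)) = x powr \<alpha> * exp (d x / x) * (y powr \<alpha> * exp (d y / y))"
      using x y by (simp add: powr_mult exp_add)
  qed auto
  show "jensen_convex_pos (F_da d \<alpha>)"
    unfolding jensen_convex_pos_def F_da_def
  proof (intro allI impI)
    fix x y :: real assume x: "x > 0" and y: "y > 0"
    have g: "d ((x+y)/2) / ((x+y)/2) = (x * (d x / x) + y * (d y / y)) / (x+y)"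
      using x y by (simp add: der_half[OF assms(1)] field_simps)
    have b0: "0 \<le> \<alpha> - 1" using assms(2) by simp
    note J = jensen_step[OF x y b0, of "d x / x" "d y / y", unfolded diff_add_cancel]
    show "((x+y)/2) powr \<alpha> * exp (d ((x+y)/2) / ((x+y)/2)) \<le> (x powr \<alpha> * exp (d x / x) + y powr \<alpha> * exp (d y / y)) / 2"
      unfolding g by (rule J)
  qed
  assume nz: "d \<noteq> (\<lambda>_. 0)"
  show "\<not> continuous_on {0<..} (F_da d \<alpha>)"
  proof
    assume cF: "continuous_on {0<..} (F_da d \<alpha>)"
    have pos: "\<And>x. x > 0 \<Longrightarrow> F_da d \<alpha> x > 0" by (simp add: F_da_def)
    have "continuous_on {0<..} (\<lambda>x. x * (ln (F_da d \<alpha> x) - \<alpha> * ln x))"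
      by (intro continuous_intros cF) (auto dest: pos)
    moreover have "x * (ln (F_da d \<alpha> x) - \<alpha> * ln x) = d x" if xp: "x \<in> {0<..}" for x
    proof -
      have x0: "x > 0" using xp by simp
      have "ln (F_da d \<alpha> x) = ln (x powr \<alpha>) + ln (exp (d x / x))"
        unfolding F_da_def using x0 by (simp add: ln_mult)
      also have "\<dots> = \<alpha> * ln x + d x / x" using x0 by (simp add: ln_powr)
      finally show ?thesis using x0 by (simp add: field_simps)
    qed
    ultimately have cd: "continuous_on {0<..} d"
      by (metis (no_types, lifting) continuous_on_cong)
    have zpos: "d x = 0" if x: "x > 0" for x
    proof (rule ccontr)
      assume ne: "d x \<noteq> 0"
      obtain e where e: "e > 0" "\<forall>x'\<in>{0<..}. dist x' x < e \<longrightarrow> dist (d x') (d x) < \<bar>d x\<bar>"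
      proof -
        have "x \<in> {0<..}" "\<bar>d x\<bar> > 0" using x ne by auto
        then show ?thesis using cd that unfolding continuous_on_iff by blast
      qed
      obtain r where r: "r \<in> \<rat>" "x < r" "r < x + e" using Rats_dense_in_real[of x "x+e"] e by auto
      have "dist (d r) (d x) < \<bar>d x\<bar>" using e r x by (simp add: dist_real_def)
      then show False using der_rat[OF assms(1) r(1)] by (simp add: dist_real_def)
    qed
    have d0: "d 0 = 0" using D(1)[of 0 0] by simp
    have "d x = 0" for x
    proof -
      consider "x > 0" | "x = 0" | "x < 0" by linarith
      then show ?thesis
      proof cases
        case 3
        have "d (x + -x) = d x + d (-x)" by (rule D(1))
        then show ?thesis using zpos[of "-x"] 3 d0 by simp
      qed (use zpos d0 in auto)
    qed
    then show False using nz by auto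
  qed
qed

end
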